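(* $\gamma(3)=8$. In particular, the word $abcabacb$ (over three distinct letters $a,b,c$) is s-primitive, and every word of length $9$ over a ternary alphabet is not s-primitive.
   Context: For words $C,S$, $C$ is an \emph{s-cover} of $S$ if for every position $i$ of $S$ there exist indices $j_0<\dots<j_{|C|-1}$ with $S[j_t]=C[t]$ for all $t$ and $i\in\{j_0,\dots,j_{|C|-1}\}$. An s-cover $C$ of $S$ is \emph{non-trivial} if $|C|<|S|$; a word is \emph{s-primitive} if it has no non-trivial s-cover. $\gamma(k)$ is the maximum length of an s-primitive word over an alphabet of size $k$. *)

theory Defs
  imports Main
begin

definition s_cover :: "'a list \<Rightarrow> 'a list \<Rightarrow> bool" where
  "s_cover C S \<longleftrightarrow>
     (\<forall>i < length S. \<exists>j :: nat \<Rightarrow> nat.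
        strict_mono_on {..<length C} j \<and>
        (\<forall>t < length C. j t < length S \<and> S ! (j t) = C ! t) \<and>
        (\<exists>t < length C. j t = i))"

definition s_primitive :: "'a list \<Rightarrow> bool" where
  "s_primitive S \<longleftrightarrow> \<not> (\<exists>C. s_cover C S \<and> length C < length S)"

(* A word over an alphabet of size k is (up to renaming letters) a word using at
   most k distinct letters; we take letters from nat. *)
definition gamma :: "nat \<Rightarrow> nat" where
  "gamma k = (GREATEST n. \<exists>w :: nat list. card (set w) \<le> k \<and> length w = n \<and> s_primitive w)"

end

theory Submission
  imports Defs "HOL-Library.Sublist"
begin


definition idx :: "'a list \<Rightarrow> 'a list \<Rightarrow> (nat \<Rightarrow> nat) \<Rightarrow> bool" where
  "idx xs ys j \<longleftrightarrow> (\<forall>r s. r < s \<and> s < length xs \<longrightarrow> j r < j s) \<and>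
     (\<forall>t<length xs. j t < length ys \<and> ys ! (j t) = xs ! t)"

lemma idxI:
  assumes "\<And>r s. r < s \<Longrightarrow> s < length xs \<Longrightarrow> j r < j s"
    and "\<And>t. t < length xs \<Longrightarrow> j t < length ys"
    and "\<And>t. t < length xs \<Longrightarrow> ys ! (j t) = xs ! t"
  shows "idx xs ys j"
  using assms unfolding idx_def by blast

lemma idxI2:
  assumes "\<And>r s. r < s \<Longrightarrow> s < length xs \<Longrightarrow> j r < j s"
    and "\<And>t. t < length xs \<Longrightarrow> j t < length ys \<and> ys ! (j t) = xs ! t"
  shows "idx xs ys j"
  using assms unfolding idx_def by blast

lemma subseq_idx: "subseq xs ys \<Longrightarrow> \<exists>j. idx xs ys j"
proof (induction rule: list_emb.induct)
  case (list_emb_Nil ys)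
  then show ?case by (auto simp: idx_def)
next
  case (list_emb_Cons xs ys y)
  then obtain j where "idx xs ys j" by blast
  then have "idx xs (y#ys) (Suc \<circ> j)" by (auto simp: idx_def)
  then show ?case by blast
next
  case (list_emb_Cons2 x y xs ys)
  then obtain j where j: "idx xs ys j" by blast
  define j' where "j' = (\<lambda>t. case t of 0 \<Rightarrow> 0 | Suc t \<Rightarrow> Suc (j t))"
  have "idx (x#xs) (y#ys) j'"
  proof (rule idxI)
    fix r s assume "r < s" "s < length (x#xs)"
    then show "j' r < j' s" using j unfolding idx_def j'_def
      by (cases r; cases s; auto)
  next
    fix t assume "t < length (x#xs)"
    then show "j' t < length (y#ys)"
      using j unfolding idx_def j'_def by (cases t) auto
  next
    fix t assume "t < length (x#xs)"
    then show "(y#ys) ! j' t = (x#xs) ! t"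
      using j list_emb_Cons2.hyps(1) unfolding idx_def j'_def by (cases t) auto
  qed
  then show ?case by blast
qed

lemma idx_subseq: "idx xs ys j \<Longrightarrow> subseq xs ys"
proof (induction ys arbitrary: xs j)
  case Nil
  then show ?case by (cases xs) (auto simp: idx_def)
next
  case (Cons y ys)
  show ?case
  proof (cases xs)
    case Nil
    then show ?thesis by simp
  next
    case (Cons x xs')
    note j = Cons.prems[unfolded idx_def Cons]
    show ?thesis
    proof (cases "j 0 = 0")
      case True
      have pos: "j (Suc t) > 0" if "t < length xs'" for t
      proof -
        have "j 0 < j (Suc t)" using j[THEN conjunct1, rule_format, of 0 "Suc t"] that by simp
        then show ?thesis by simp
      qed
      have "idx xs' ys (\<lambda>t. j (Suc t) - 1)"
      proof (rule idxI)
        fix r s assume "r < s" "s < length xs'"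
        moreover have "j (Suc r) < j (Suc s)" using j[THEN conjunct1, rule_format, of "Suc r" "Suc s"] calculation by simp
        ultimately show "j (Suc r) - 1 < j (Suc s) - 1" using pos[of r] by linarith
      next
        fix t assume t: "t < length xs'"
        then have "j (Suc t) < length (y#ys)" "(y#ys) ! j (Suc t) = xs' ! t" using j by auto
        then show "j (Suc t) - 1 < length ys" "ys ! (j (Suc t) - 1) = xs' ! t"
          using pos[OF t] by (cases "j (Suc t)"; auto)+
      qed
      then have "subseq xs' ys" using Cons.IH by blast
      moreover have "x = y" using j True by force
      ultimately show ?thesis using Cons by simp
    next
      case False
      have pos: "j t > 0" if "t < length xs" for t
      proof (cases t)
        case 0 then show ?thesis using False by simp
      next
        case (Suc u)
        have "j 0 < j t" using j[THEN conjunct1, rule_format, of 0 t] that Suc Cons by simp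
        then show ?thesis by simp
      qed
      have "idx xs ys (\<lambda>t. j t - 1)"
      proof (rule idxI)
        fix r s assume "r < s" "s < length xs"
        moreover have "j r < j s" using j[THEN conjunct1, rule_format, of r s] calculation Cons by simp
        ultimately show "j r - 1 < j s - 1" using pos[of r] by linarith
      next
        fix t assume t: "t < length xs"
        then have "j t < length (y#ys)" "(y#ys) ! j t = xs ! t" using j Cons by auto
        then show "j t - 1 < length ys" "ys ! (j t - 1) = xs ! t"
          using pos[OF t] by (cases "j t"; auto)+
      qed
      then have "subseq xs ys" using Cons.IH by blast
      then show ?thesis by (rule list_emb_Cons)
    qed
  qed
qed

lemma idx_at:
  assumes tC: "t < length C"
  shows "(\<exists>j. idx C S j \<and> j t = i) \<longleftrightarrow>
    (i < length S \<and> C ! t = S ! i \<and> subseq (take t C) (take i S) \<and>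
     subseq (drop (Suc t) C) (drop (Suc i) S))"
proof
  assume "\<exists>j. idx C S j \<and> j t = i"
  then obtain j where j: "idx C S j" and ji: "j t = i" by blast
  have mono: "j r < j s" if "r < s" "s < length C" for r s
    using j that unfolding idx_def by blast
  have bnd: "j u < length S" "S ! j u = C ! u" if "u < length C" for u
    using j that unfolding idx_def by blast+
  have iS: "i < length S" using bnd(1)[OF tC] ji by simp
  moreover have "C ! t = S ! i" using bnd(2)[OF tC] ji by simp
  moreover have "idx (take t C) (take i S) j"
  proof (rule idxI)
    fix r s assume "r < s" "s < length (take t C)"
    then show "j r < j s" using mono by simp
  next
    fix u assume u: "u < length (take t C)"
    then have "j u < i" using mono[of u t] tC ji by simp
    then show "j u < length (take i S)" using iS by simp
    show "take i S ! j u = take t C ! u" using u \<open>j u < i\<close> bnd[of u] by simp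
  qed
  moreover have "idx (drop (Suc t) C) (drop (Suc i) S) (\<lambda>u. j (Suc t + u) - Suc i)"
  proof (rule idxI)
    fix r s assume "r < s" "s < length (drop (Suc t) C)"
    then have "Suc t + s < length C" "Suc t + r < length C" "r < s" by auto
    then have "j (Suc t + r) < j (Suc t + s)" "j t < j (Suc t + r)"
      using mono[of "Suc t + r" "Suc t + s"] mono[of t "Suc t + r"] by auto
    then show "j (Suc t + r) - Suc i < j (Suc t + s) - Suc i"
      using ji by linarith
  next
    fix u assume u: "u < length (drop (Suc t) C)"
    then have u': "Suc t + u < length C" by simp
    then have gt: "j (Suc t + u) > i" using mono[of t "Suc t + u"] ji by simp
    have b: "j (Suc t + u) < length S" "S ! j (Suc t + u) = C ! (Suc t + u)" using bnd u' by auto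
    show "j (Suc t + u) - Suc i < length (drop (Suc i) S)"
      using gt b by simp
    have "drop (Suc i) S ! (j (Suc t + u) - Suc i) = S ! (Suc i + (j (Suc t + u) - Suc i))"
      using iS gt b by (simp add: nth_drop)
    also have "\<dots> = S ! j (Suc t + u)" using gt by simp
    finally show "drop (Suc i) S ! (j (Suc t + u) - Suc i) = drop (Suc t) C ! u"
      using b u' by simp
  qed
  ultimately show "i < length S \<and> C ! t = S ! i \<and> subseq (take t C) (take i S) \<and>
     subseq (drop (Suc t) C) (drop (Suc i) S)" using idx_subseq by blast
next
  assume a: "i < length S \<and> C ! t = S ! i \<and> subseq (take t C) (take i S) \<and>
     subseq (drop (Suc t) C) (drop (Suc i) S)"
  then obtain j1 j2 where j1: "idx (take t C) (take i S) j1"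
    and j2: "idx (drop (Suc t) C) (drop (Suc i) S) j2" using subseq_idx by blast
  have m1: "j1 r < j1 s" if "r < s" "s < t" for r s
    using j1 that tC unfolding idx_def by simp
  have b1: "j1 u < i" "S ! j1 u = C ! u" if "u < t" for u
    using j1 that tC a unfolding idx_def by auto
  have m2: "j2 r < j2 s" if "r < s" "s < length C - Suc t" for r s
    using j2 that unfolding idx_def by simp
  have b2: "j2 u < length S - Suc i" "S ! (Suc i + j2 u) = C ! (Suc t + u)"
    if "u < length C - Suc t" for u
    using j2 that a unfolding idx_def by auto
  define j where "j = (\<lambda>u. if u < t then j1 u else if u = t then i else Suc i + j2 (u - Suc t))"
  have jlt: "j u = j1 u" if "u < t" for u using that unfolding j_def by simp
  have jeq: "j t = i" unfolding j_def by simp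
  have jgt: "j u = Suc i + j2 (u - Suc t)" if "u > t" for u using that unfolding j_def by simp
  have "idx C S j"
  proof (rule idxI2)
    fix r s assume rs: "r < s" "s < length C"
    consider "s < t" | "s = t" | "s > t" by linarith
    then show "j r < j s"
    proof cases
      case 1 then show ?thesis using rs m1[of r s] jlt[of r] jlt[of s] by simp
    next
      case 2 then show ?thesis using rs b1[of r] jlt[of r] jeq by simp
    next
      case 3
      consider "r < t" | "r = t" | "r > t" by linarith
      then show ?thesis
      proof cases
        case 1 then show ?thesis using 3 b1[of r] jlt[of r] jgt[of s] by simp
      next
        case 2 then show ?thesis using 3 jeq jgt[of s] by simp
      next
        case r: 3
        have "r - Suc t < s - Suc t" "s - Suc t < length C - Suc t" using r 3 rs by auto
        then have "j2 (r - Suc t) < j2 (s - Suc t)" using m2 by blast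
        then show ?thesis using 3 r jgt[of s] jgt[of r] by simp
      qed
    qed
  next
    fix u assume u: "u < length C"
    consider "u < t" | "u = t" | "u > t" by linarith
    then show "j u < length S \<and> S ! j u = C ! u"
    proof cases
      case 1 then show ?thesis using b1[of u] jlt[of u] a by simp
    next
      case 2 then show ?thesis using jeq a by simp
    next
      case 3
      have "u - Suc t < length C - Suc t" using u 3 by simp
      from b2[OF this] have "j2 (u - Suc t) < length S - Suc i" "S ! (Suc i + j2 (u - Suc t)) = C ! u"
        using 3 by auto
      then show ?thesis using jgt[OF 3] by simp
    qed
  qed
  moreover have "j t = i" unfolding j_def by simp
  ultimately show "\<exists>j. idx C S j \<and> j t = i" by blast
qed

definition cov :: "'a list \<Rightarrow> 'a list \<Rightarrow> bool" where
  "cov C S \<longleftrightarrow> (\<forall>i\<in>set [0..<length S]. \<exists>t\<in>set [0..<length C]. C ! t = S ! i \<and>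
     subseq (take t C) (take i S) \<and> subseq (drop (Suc t) C) (drop (Suc i) S))"

lemma s_cover_cov: "s_cover C S \<longleftrightarrow> cov C S"
proof -
  have sm: "strict_mono_on {..<length C} j \<longleftrightarrow> (\<forall>r s. r < s \<and> s < length C \<longrightarrow> j r < j s)" for j
    unfolding strict_mono_on_def by auto
  have 1: "s_cover C S \<longleftrightarrow> (\<forall>i<length S. \<exists>j. idx C S j \<and> (\<exists>t<length C. j t = i))"
    unfolding s_cover_def sm idx_def by (simp add: conj_assoc)
  have 2: "(\<exists>j. idx C S j \<and> (\<exists>t<length C. j t = i)) \<longleftrightarrow>
     (\<exists>t<length C. (\<exists>j. idx C S j \<and> j t = i))" for i
    by blast
  have 3: "(\<exists>t<length C. (\<exists>j. idx C S j \<and> j t = i)) \<longleftrightarrow>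
     (\<exists>t<length C. i < length S \<and> C ! t = S ! i \<and> subseq (take t C) (take i S) \<and>
     subseq (drop (Suc t) C) (drop (Suc i) S))" for i
    using idx_at by blast
  show ?thesis unfolding 1 2 3 cov_def by (simp add: atLeast0LessThan Ball_def Bex_def)
qed

lemma cov_alt: "cov C S \<longleftrightarrow> (\<forall>i<length S. \<exists>t<length C. C ! t = S ! i \<and>
     subseq (take t C) (take i S) \<and> subseq (drop (Suc t) C) (drop (Suc i) S))"
  unfolding cov_def by (simp add: atLeast0LessThan Ball_def Bex_def)


definition pats :: "(nat list \<times> nat list) list" where
 "pats = [([0,0], [0]), ([1,1], [1]), ([2,2], [2]), ([0,1,0,1], [0,1]), ([0,2,0,2], [0,2]), ([1,0,1,0], [1,0]), ([1,2,1,2], [1,2]), ([2,0,2,0], [2,0]), ([2,1,2,1], [2,1]), ([0,1,0,2,1,2], [0,1,2]), ([0,1,2,0,1,2], [0,1,2]), ([0,2,0,1,2,1], [0,2,1]), ([0,2,1,0,2,1], [0,2,1]), ([1,0,1,2,0,2], [1,0,2]), ([1,0,2,1,0,2], [1,0,2]), ([1,2,0,1,2,0], [1,2,0]), ([1,2,1,0,2,0], [1,2,0]), ([2,0,1,2,0,1], [2,0,1]), ([2,0,2,1,0,1], [2,0,1]), ([2,1,0,2,1,0], [2,1,0]), ([2,1,2,0,1,0], [2,1,0]), ([0,1,0,2,0,1,2], [0,1,2]), ([0,1,2,0,2,1,2], [0,1,2]), ([0,1,2,1,0,1,2], [0,1,2]), ([0,2,0,1,0,2,1], [0,2,1]), ([0,2,1,0,1,2,1],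 [0,2,1]), ([0,2,1,2,0,2,1], [0,2,1]), ([1,0,1,2,1,0,2], [1,0,2]), ([1,0,2,0,1,0,2], [1,0,2]), ([1,0,2,1,2,0,2], [1,0,2]), ([1,2,0,1,0,2,0], [1,2,0]), ([1,2,0,2,1,2,0], [1,2,0]), ([1,2,1,0,1,2,0], [1,2,0]), ([2,0,1,0,2,0,1], [2,0,1]), ([2,0,1,2,1,0,1], [2,0,1]), ([2,0,2,1,2,0,1], [2,0,1]), ([2,1,0,1,2,1,0], [2,1,0]), ([2,1,0,2,0,1,0], [2,1,0]), ([2,1,2,0,2,1,0], [2,1,0]), ([0,1,0,2,1,0,1,2], [0,1,2]), ([0,1,2,1,0,2,1,2], [0,1,2]), ([0,2,0,1,2,0,2,1], [0,2,1]), ([0,2,1,2,0,1,2,1], [0,2,1]), ([1,0,1,2,0,1,0,2], [1,0,2]), ([1,0,2,0,1,2,0,2], [1,0,2]), ([1,2,0,2,1,0,2,0], [1,2,0]), ([1,2,1,0,2,1,2,0], [1,2,0]), ([2,0,1,0,2,1,0,1], [2,0,1]), ([2,0,2,1,0,2,0,1], [2,0,1]), ([2,1,0,1,2,0,1,0], [2,1,0]), ([2,1,2,0,1,2,1,0], [2,1,0]), ([0,1,2,0,1,0,2,1,0], [0,1,2,1,0]), ([0,2,1,0,2,0,1,2,0], [0,2,1,2,0]), ([1,0,2,1,0,1,2,0,1], [1,0,2,0,1]), ([1,2,0,1,2,1,0,2,1], [1,2,0,2,1]), ([2,0,1,2,0,2,1,0,2], [2,0,1,0,2]), ([2,1,0,2,1,2,0,1,2],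 [2,1,0,1,2])]"
definition endsw :: "nat list \<Rightarrow> nat list \<Rightarrow> bool" where
 "endsw p w \<longleftrightarrow> length p \<le> length w \<and> drop (length w - length p) w = p"
definition hasp :: "nat list \<Rightarrow> bool" where
 "hasp w \<longleftrightarrow> list_ex (\<lambda>pc. endsw (fst pc) w) pats"
fun ext :: "nat \<Rightarrow> nat list \<Rightarrow> bool" where
 "ext 0 w = hasp w"
| "ext (Suc n) w = (hasp w \<or> (ext n (w@[0]) \<and> ext n (w@[1]) \<and> ext n (w@[2])))"
lemma pats_ok: "list_all (\<lambda>(p,c). cov c p \<and> length c < length p) pats"
  by code_simp
lemma ext9: "ext 9 []"
  by code_simp
lemma prim8: "list_all (\<lambda>C. length C < 8 \<longrightarrow> \<not> cov C [0,1,2,0,1,0,2,1::nat]) (subseqs [0,1,2,0,1,0,2,1::nat])"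
  by code_simp


lemma cov_map: "cov C S \<Longrightarrow> cov (map f C) (map f S)"
  unfolding cov_alt
proof (intro allI impI)
  fix i assume "\<forall>i<length S. \<exists>t<length C. C ! t = S ! i \<and>
     subseq (take t C) (take i S) \<and> subseq (drop (Suc t) C) (drop (Suc i) S)"
    and i: "i < length (map f S)"
  then obtain t where t: "t < length C" "C ! t = S ! i" "subseq (take t C) (take i S)"
    "subseq (drop (Suc t) C) (drop (Suc i) S)" by auto
  show "\<exists>t<length (map f C). map f C ! t = map f S ! i \<and>
     subseq (take t (map f C)) (take i (map f S)) \<and> subseq (drop (Suc t) (map f C)) (drop (Suc i) (map f S))"
  proof (intro exI[of _ t] conjI)
    show "subseq (take t (map f C)) (take i (map f S))" using subseq_map[OF t(3), of f] by (simp add: take_map)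
    show "subseq (drop (Suc t) (map f C)) (drop (Suc i) (map f S))" using subseq_map[OF t(4), of f] by (simp add: drop_map)
  qed (use t i in auto)
qed

lemma cov_subseq_aux:
  assumes "t < length C" "i < length S" "C ! t = S ! i" "subseq (take t C) (take i S)"
    "subseq (drop (Suc t) C) (drop (Suc i) S)"
  shows "subseq C S"
proof -
  have "C = take t C @ [C ! t] @ drop (Suc t) C" using assms(1) by (simp add: id_take_nth_drop)
  moreover have "S = take i S @ [S ! i] @ drop (Suc i) S" using assms(2) by (simp add: id_take_nth_drop)
  moreover have "subseq (take t C @ [C ! t] @ drop (Suc t) C) (take i S @ [S ! i] @ drop (Suc i) S)"
    using assms(3-5) by (intro list_emb_append_mono) auto
  ultimately show ?thesis by metis
qed

lemma cov_subseq: "cov C S \<Longrightarrow> S \<noteq> [] \<Longrightarrow> subseq C S"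
proof -
  assume "cov C S" "S \<noteq> []"
  then obtain t where t: "t < length C" "C ! t = S ! 0" "subseq (take t C) (take 0 S)"
    "subseq (drop (Suc t) C) (drop (Suc 0) S)" unfolding cov_alt by blast
  show ?thesis using cov_subseq_aux[OF t(1) _ t(2-4)] \<open>S \<noteq> []\<close> by simp
qed

lemma cov_factor:
  assumes cv: "cov C u" and ne: "u \<noteq> []"
  shows "cov (x @ C @ y) (x @ u @ y)"
  unfolding cov_alt
proof (intro allI impI)
  have sub: "subseq C u" using cov_subseq[OF cv ne] .
  fix i assume "i < length (x @ u @ y)"
  then have i: "i < length x + length u + length y" by simp
  consider "i < length x" | "length x \<le> i \<and> i < length x + length u" | "length x + length u \<le> i" by linarith
  then show "\<exists>t<length (x @ C @ y). (x @ C @ y) ! t = (x @ u @ y) ! i \<and>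
         subseq (take t (x @ C @ y)) (take i (x @ u @ y)) \<and>
         subseq (drop (Suc t) (x @ C @ y)) (drop (Suc i) (x @ u @ y))"
  proof cases
    case 1
    have "subseq (drop (Suc i) x @ C @ y) (drop (Suc i) x @ u @ y)"
      using sub by (intro list_emb_append_mono) auto
    then show ?thesis using 1 by (intro exI[of _ i]) (auto simp: nth_append)
  next
    case 2
    define k where "k = i - length x"
    have k: "k < length u" "i = length x + k" using 2 unfolding k_def by auto
    obtain t where t: "t < length C" "C ! t = u ! k" "subseq (take t C) (take k u)"
      "subseq (drop (Suc t) C) (drop (Suc k) u)"
      using cv k(1) unfolding cov_alt by auto
    have a: "subseq (x @ take t C) (x @ take k u)" using t(3) by (simp add: subseq_append')
    have b: "subseq (drop (Suc t) C @ y) (drop (Suc k) u @ y)" using t(4) by simp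
    show ?thesis
      using t k a b by (intro exI[of _ "length x + t"]) (auto simp: nth_append)
  next
    case 3
    define k where "k = i - length x - length u"
    have k: "k < length y" "i = length x + length u + k" using 3 i unfolding k_def by auto
    have lc: "length C \<le> length u" using sub by (rule list_emb_length)
    have a: "subseq (x @ C @ take k y) (x @ u @ take k y)"
      using sub by (intro list_emb_append_mono) auto
    have dC: "drop (Suc (length x + length C + k)) (x @ C @ y) = drop (Suc k) y" by simp
    have dU: "drop (Suc (length x + length u + k)) (x @ u @ y) = drop (Suc k) y" by simp
    have tC: "take (length x + length C + k) (x @ C @ y) = x @ C @ take k y" by simp
    have tU: "take (length x + length u + k) (x @ u @ y) = x @ u @ take k y" by simp
    have nC: "(x @ C @ y) ! (length x + length C + k) = y ! k" by (simp add: nth_append)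
    have nU: "(x @ u @ y) ! (length x + length u + k) = y ! k" by (simp add: nth_append)
    have "length x + length C + k < length (x @ C @ y)" using k by simp
    moreover have "subseq (drop (Suc (length x + length C + k)) (x @ C @ y)) (drop (Suc i) (x @ u @ y))"
      unfolding dC k(2) dU by simp
    moreover have "subseq (take (length x + length C + k) (x @ C @ y)) (take i (x @ u @ y))"
      unfolding tC k(2) tU using a .
    moreover have "(x @ C @ y) ! (length x + length C + k) = (x @ u @ y) ! i"
      unfolding nC k(2) nU ..
    ultimately show ?thesis by blast
  qed
qed



lemma s_primitive_cov: "s_primitive S \<longleftrightarrow> \<not> (\<exists>C. cov C S \<and> length C < length S)"
  unfolding s_primitive_def s_cover_cov ..

lemma part2:
  fixes a b c :: 'a
  assumes "a \<noteq> b" "a \<noteq> c" "b \<noteq> c"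
  shows "s_primitive [a, b, c, a, b, a, c, b]"
proof -
  define g :: "'a \<Rightarrow> nat" where "g x = (if x = a then 0 else if x = b then 1 else 2)" for x
  have gS: "map g [a, b, c, a, b, a, c, b] = [0,1,2,0,1,0,2,1]"
    using assms unfolding g_def by simp
  show ?thesis unfolding s_primitive_cov
  proof
    assume "\<exists>C. cov C [a, b, c, a, b, a, c, b] \<and> length C < length [a, b, c, a, b, a, c, b]"
    then obtain C where C: "cov C [a, b, c, a, b, a, c, b]" "length C < 8" by auto
    have cv: "cov (map g C) [0,1,2,0,1,0,2,1]" using cov_map[OF C(1), of g] gS by simp
    then have "subseq (map g C) [0,1,2,0,1,0,2,1::nat]" using cov_subseq by blast
    then have "map g C \<in> set (subseqs [0,1,2,0,1,0,2,1::nat])" by (simp only: in_set_subseqs)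
    moreover have "\<forall>C\<in>set (subseqs [0,1,2,0,1,0,2,1::nat]). length C < 8 \<longrightarrow> \<not> cov C [0,1,2,0,1,0,2,1::nat]"
      using prim8 by (simp only: list_all_iff)
    ultimately have "length (map g C) < 8 \<longrightarrow> \<not> cov (map g C) [0,1,2,0,1,0,2,1::nat]"
      by blast
    then show False using cv C(2) by simp
  qed
qed

lemma ext_sound:
  "ext n w \<Longrightarrow> length v = n \<Longrightarrow> set v \<subseteq> {0,1,2} \<Longrightarrow>
    \<exists>x p c y. w @ v = x @ p @ y \<and> (p, c) \<in> set pats"
proof (induction n arbitrary: w v)
  case 0
  then obtain pc where "pc \<in> set pats" "endsw (fst pc) w"
    by (auto simp: hasp_def list_ex_iff)
  then have "(fst pc, snd pc) \<in> set pats" "endsw (fst pc) w" by simp_all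
  then obtain p c where pc: "(p, c) \<in> set pats" "endsw p w" by blast
  then have "w = take (length w - length p) w @ p" unfolding endsw_def
    using append_take_drop_id[of "length w - length p" w] by simp
  then have "w @ v = take (length w - length p) w @ p @ []" using 0 by simp
  then show ?case using pc by blast
next
  case (Suc n)
  show ?case
  proof (cases "hasp w")
    case True
    then obtain pc where "pc \<in> set pats" "endsw (fst pc) w"
      by (auto simp: hasp_def list_ex_iff)
    then have "(fst pc, snd pc) \<in> set pats" "endsw (fst pc) w" by simp_all
    then obtain p c where pc: "(p, c) \<in> set pats" "endsw p w" by blast
    then have "w = take (length w - length p) w @ p" unfolding endsw_def
      using append_take_drop_id[of "length w - length p" w] by simp
    then have "w @ v = take (length w - length p) w @ p @ v" by (metis append.assoc)
    then show ?thesis using pc by blast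
  next
    case False
    then have e: "ext n (w@[0])" "ext n (w@[1])" "ext n (w@[2])" using Suc.prems(1) by auto
    obtain a v' where v: "v = a # v'" using Suc.prems(2) by (cases v) auto
    have a: "a \<in> {0,1,2}" "set v' \<subseteq> {0,1,2}" "length v' = n" using Suc.prems v by auto
    have "ext n (w@[a])" using e a(1) by auto
    from Suc.IH[OF this a(3) a(2)] obtain x p c y where "(w @ [a]) @ v' = x @ p @ y" "(p, c) \<in> set pats"
      by blast
    then show ?thesis using v by auto
  qed
qed

lemma nat9:
  fixes v :: "nat list"
  assumes "length v = 9" "set v \<subseteq> {0,1,2}"
  shows "\<exists>C. cov C v \<and> length C < length v"
proof -
  obtain x p c y where v: "v = x @ p @ y" and pc: "(p, c) \<in> set pats"
    using ext_sound[OF ext9 assms] by auto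
  have "cov c p \<and> length c < length p" using pats_ok pc by (auto simp: list_all_iff)
  moreover have "p \<noteq> []" using calculation by auto
  ultimately have "cov (x @ c @ y) v" "length (x @ c @ y) < length v"
    using cov_factor[of c p x y] v by auto
  then show ?thesis by blast
qed

lemma part3:
  fixes w :: "'b list"
  assumes len: "length w = 9" and card: "card (set w) \<le> 3"
  shows "\<not> s_primitive w"
proof -
  define L where "L = remdups w"
  have lL: "length L \<le> 3" using card unfolding L_def by (simp add: length_remdups_card_conv)
  define g where "g x = (SOME k. k < length L \<and> L ! k = x)" for x
  have g: "g x < length L \<and> L ! g x = x" if "x \<in> set w" for x
  proof -
    have "x \<in> set L" using that unfolding L_def by simp
    then have "\<exists>k. k < length L \<and> L ! k = x" by (simp add: in_set_conv_nth)
    then show ?thesis unfolding g_def by (rule someI_ex)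
  qed
  define v where "v = map g w"
  have "set v \<subseteq> {0,1,2}"
  proof
    fix k assume "k \<in> set v"
    then obtain x where "x \<in> set w" "k = g x" unfolding v_def set_map by blast
    then have "k < 3" using g[of x] lL by simp
    then show "k \<in> {0,1,2}" by auto
  qed
  moreover have "length v = 9" using len unfolding v_def by simp
  ultimately obtain C where C: "cov C v" "length C < length v" using nat9 by blast
  have gL: "L ! g x = x" if "x \<in> set w" for x using g[OF that] by blast
  have "map (\<lambda>k. L ! k) v = map (\<lambda>x. L ! g x) w" unfolding v_def map_map o_def ..
  also have "\<dots> = w"
  proof (rule map_idI)
    fix x assume "x \<in> set w"
    then show "L ! g x = x" by (rule gL)
  qed
  finally have "map (\<lambda>k. L ! k) v = w" .
  then have "cov (map (\<lambda>k. L ! k) C) w" using cov_map[OF C(1), of "\<lambda>k. L ! k"] by simp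
  moreover have "length (map (\<lambda>k. L ! k) C) < length w" using C(2) unfolding v_def by simp
  ultimately show ?thesis unfolding s_primitive_cov by blast
qed

lemma gamma3: "gamma 3 = 8"
  unfolding gamma_def
proof (rule Greatest_equality)
  show "\<exists>w :: nat list. card (set w) \<le> 3 \<and> length w = 8 \<and> s_primitive w"
  proof (rule exI[of _ "[0,1,2,0,1,0,2,1]"])
    have "set [0,1,2,0,1,0,2,1::nat] = {0,1,2}" by auto
    then show "card (set [0,1,2,0,1,0,2,1::nat]) \<le> 3 \<and> length [0,1,2,0,1,0,2,1::nat] = 8 \<and>
      s_primitive [0,1,2,0,1,0,2,1::nat]" using part2[of "0::nat" 1 2] by simp
  qed
next
  fix n assume "\<exists>w :: nat list. card (set w) \<le> 3 \<and> length w = n \<and> s_primitive w"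
  then obtain w :: "nat list" where w: "card (set w) \<le> 3" "length w = n" "s_primitive w" by blast
  show "n \<le> 8"
  proof (rule ccontr)
    assume "\<not> n \<le> 8"
    then have n9: "n \<ge> 9" by simp
    have "card (set (take 9 w)) \<le> card (set w)" by (rule card_mono) (auto simp: set_take_subset)
    then have "\<not> s_primitive (take 9 w)" using part3[of "take 9 w"] w n9 by simp
    then obtain C where C: "cov C (take 9 w)" "length C < 9" using n9 w(2)
      unfolding s_primitive_cov by auto
    have ne: "take 9 w \<noteq> []" using n9 w(2) by auto
    have "cov ([] @ C @ drop 9 w) ([] @ take 9 w @ drop 9 w)" by (rule cov_factor[OF C(1) ne])
    then have "cov (C @ drop 9 w) w" by simp
    moreover have "length (C @ drop 9 w) < length w" using C(2) n9 w(2) by simp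
    ultimately show False using w(3) unfolding s_primitive_cov by blast
  qed
qed

theorem mainTheorem5:
  shows "gamma 3 = 8
    \<and> (\<forall>(a :: 'a) b c. a \<noteq> b \<and> a \<noteq> c \<and> b \<noteq> c \<longrightarrow> s_primitive [a, b, c, a, b, a, c, b])
    \<and> (\<forall>w :: 'b list. length w = 9 \<and> card (set w) \<le> 3 \<longrightarrow> \<not> s_primitive w)"
proof (intro conjI)
  show "gamma 3 = 8" by (rule gamma3)
  show "\<forall>(a :: 'a) b c. a \<noteq> b \<and> a \<noteq> c \<and> b \<noteq> c \<longrightarrow> s_primitive [a, b, c, a, b, a, c, b]"
  proof (intro allI impI)
    fix a b c :: 'a
    assume "a \<noteq> b \<and> a \<noteq> c \<and> b \<noteq> c"
    then show "s_primitive [a, b, c, a, b, a, c, b]" using part2[of a b c] by simp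
  qed
  show "\<forall>w :: 'b list. length w = 9 \<and> card (set w) \<le> 3 \<longrightarrow> \<not> s_primitive w"
  proof (intro allI impI)
    fix w :: "'b list"
    assume "length w = 9 \<and> card (set w) \<le> 3"
    then show "\<not> s_primitive w" using part3[of w] by simp
  qed
qed

end
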